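(* For the unique formal series solution $(f^{0,+},g^{0,+})$ of $q$-$P(A_1)$ with $F^{0,+}_{1,1}=1$, $G^{0,+}_{1,1}=\Lambda$, the coefficients of $t^1$ are $$F_1^{0,+}(\phi)=\sum_{i\le1}F^{0,+}_{1,i}\phi^i=\phi+F_{\rm eq}+\mu\phi^{-1},\qquad G_1^{0,+}(\phi)=\sum_{i\le1}G^{0,+}_{1,i}\phi^i=\Lambda\phi+G_{\rm eq}+\frac{b_1b_2b_3b_4}{\Lambda}\mu\phi^{-1},$$ i.e. $F^{0,+}_{1,i}=G^{0,+}_{1,i}=0$ for $i\le-2$.
   Context: Parameters $\mathbf b=(b_1,\dots,b_8)\in(\mathbb C^* )^8$, $q=\frac{b_1b_2b_3b_4}{b_5b_6b_7b_8}$, $B=b_1b_2b_3b_4$. The equation $q$-$P(A_1)$ for $f=f(t)$, $g=g(t)$ is $$(gf-t^2)(g\bar f-qt^2)(g-b_5)(g-b_6)(g-b_7)(g-b_8)=(gf-1)(g\bar f-1)(g-b_1t)(g-b_2t)(g-b_3t)(g-b_4t),$$ $$(g\bar f-qt^2)(\bar g\bar f-q^2t^2)(\bar f-b_5^{-1})(\bar f-b_6^{-1})(\bar f-b_7^{-1})(\bar f-b_8^{-1})=(g\bar f-1)(\bar g\bar f-1)(\bar f-b_1^{-1}qt)(\bar f-b_2^{-1}qt)(\bar f-b_3^{-1}qt)(\bar f-b_4^{-1}qt).$$ Formal setting: $\Lambda,\phi$ are indeterminates, $\lambda=\Lambda^2/B$; formal solutions are pairs $f=\sum_{n\ge1}\sum_{i\le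 n}F_{n,i}\phi^it^n$, $g=\sum_{n\ge1}\sum_{i\le n}G_{n,i}\phi^it^n$ (coefficients depending on $(\Lambda,\mathbf b)$) satisfying both equations identically, where the shift is $t\mapsto qt$, $\phi\mapsto\lambda\phi$, $\Lambda\mapsto\Lambda$. There is a unique such solution with $F_{1,1}=1$, $G_{1,1}=\Lambda$, denoted $(f^{0,+},g^{0,+})$ with coefficients $F^{0,+}_{n,i},G^{0,+}_{n,i}$. $S_i^{\pm}$ is the $i$-th elementary symmetric polynomial in $b_1^{\pm1},\dots,b_4^{\pm1}$, and $F_{\rm eq}=-\frac{B\Lambda(S_1^++2S_1^-\Lambda+S_3^-\Lambda^2)}{(B-\Lambda^2)^2}$, $G_{\rm eq}=-\frac{B\Lambda(S_3^++2S_1^+\Lambda+S_1^-\Lambda^2)}{(B-\Lambda^2)^2}$, $\mu=\frac{\Lambda\prod_{1\le a<c\le4}(\Lambda+b_ab_c)}{(B-\Lambda^2)^4}$. *)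

theory Defs
  imports Complex_Main "HOL-Computational_Algebra.Formal_Laurent_Series"
    "HOL-Computational_Algebra.Fraction_Field"
begin

unbundle fps_syntax

text \<open>Coefficient field: rational functions in the indeterminate Lambda over the complex numbers.\<close>
type_synonym K = "complex poly fract"

text \<open>A series in the indeterminate phi bounded above in the exponent of phi is represented
  as a formal Laurent series in psi = phi^(-1): the coefficient of phi^i is the coefficient
  of psi^(-i).\<close>
type_synonym R = "K fls"
type_synonym S = "R fps"

definition cK :: "complex \<Rightarrow> K" where "cK z = Fract [:z:] 1"

definition LambdaK :: K where "LambdaK = Fract [:0, 1:] 1"

definition cS :: "K \<Rightarrow> S" where "cS c = fps_const (fls_const c)"

definition BB :: "complex \<Rightarrow> complex \<Rightarrow> complex \<Rightarrow> complex \<Rightarrow> complex"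
  where "BB b1 b2 b3 b4 = b1 * b2 * b3 * b4"

definition qq :: "complex \<Rightarrow> complex \<Rightarrow> complex \<Rightarrow> complex \<Rightarrow>
    complex \<Rightarrow> complex \<Rightarrow> complex \<Rightarrow> complex \<Rightarrow> complex"
  where "qq b1 b2 b3 b4 b5 b6 b7 b8 = (b1 * b2 * b3 * b4) / (b5 * b6 * b7 * b8)"

definition lamK :: "complex \<Rightarrow> K" where "lamK B = LambdaK ^ 2 / cK B"

text \<open>phi \<mapsto> lam * phi on a series in phi: the coefficient of phi^i (= psi^(-i)) is
  multiplied by lam^i.\<close>
definition phi_scale :: "K \<Rightarrow> R \<Rightarrow> R" where
  "phi_scale lam x = Abs_fls (\<lambda>j. lam powi (- j) * (x $$ j))"

text \<open>The shift t \<mapsto> q t, phi \<mapsto> lam phi, Lambda \<mapsto> Lambda.\<close>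
definition qshift :: "complex \<Rightarrow> K \<Rightarrow> S \<Rightarrow> S" where
  "qshift q lam f = Abs_fps (\<lambda>n. fls_const (cK q ^ n) * phi_scale lam (f $ n))"

text \<open>Formal solution of q-P(A1) in the sense of the paper
  (f = sum_{n>=1} sum_{i<=n} F_{n,i} phi^i t^n, likewise g).\<close>
definition formal_solution ::
  "complex \<Rightarrow> complex \<Rightarrow> complex \<Rightarrow> complex \<Rightarrow>
   complex \<Rightarrow> complex \<Rightarrow> complex \<Rightarrow> complex \<Rightarrow> S \<Rightarrow> S \<Rightarrow> bool" where
  "formal_solution b1 b2 b3 b4 b5 b6 b7 b8 f g \<longleftrightarrow>
     (let q = qq b1 b2 b3 b4 b5 b6 b7 b8;
          lam = lamK (BB b1 b2 b3 b4);
          t = fps_X :: S;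
          c = (\<lambda>z. cS (cK z));
          fb = qshift q lam f;
          gb = qshift q lam g
      in f $ 0 = 0 \<and> g $ 0 = 0 \<and>
         (\<forall>n::nat. \<forall>i::int. i > int n \<longrightarrow> (f $ n) $$ (- i) = 0 \<and> (g $ n) $$ (- i) = 0) \<and>
         (g * f - t ^ 2) * (g * fb - c q * t ^ 2) *
            (g - c b5) * (g - c b6) * (g - c b7) * (g - c b8)
          = (g * f - 1) * (g * fb - 1) *
            (g - c b1 * t) * (g - c b2 * t) * (g - c b3 * t) * (g - c b4 * t) \<and>
         (g * fb - c q * t ^ 2) * (gb * fb - c (q ^ 2) * t ^ 2) *
            (fb - c (inverse b5)) * (fb - c (inverse b6)) * (fb - c (inverse b7)) * (fb - c (inverse b8))
          = (g * fb - 1) * (gb * fb - 1) *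
            (fb - c (inverse b1 * q) * t) * (fb - c (inverse b2 * q) * t) *
            (fb - c (inverse b3 * q) * t) * (fb - c (inverse b4 * q) * t))"

definition coeffF :: "S \<Rightarrow> nat \<Rightarrow> int \<Rightarrow> K" where
  "coeffF f n i = (f $ n) $$ (- i)"

definition S1 :: "complex \<Rightarrow> complex \<Rightarrow> complex \<Rightarrow> complex \<Rightarrow> complex" where
  "S1 a1 a2 a3 a4 = a1 + a2 + a3 + a4"
definition S3 :: "complex \<Rightarrow> complex \<Rightarrow> complex \<Rightarrow> complex \<Rightarrow> complex" where
  "S3 a1 a2 a3 a4 = a1 * a2 * a3 + a1 * a2 * a4 + a1 * a3 * a4 + a2 * a3 * a4"

definition Feq :: "complex \<Rightarrow> complex \<Rightarrow> complex \<Rightarrow> complex \<Rightarrow> K" where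
  "Feq b1 b2 b3 b4 =
    (let B = cK (BB b1 b2 b3 b4); L = LambdaK;
         S1p = cK (S1 b1 b2 b3 b4);
         S1m = cK (S1 (inverse b1) (inverse b2) (inverse b3) (inverse b4));
         S3m = cK (S3 (inverse b1) (inverse b2) (inverse b3) (inverse b4))
     in - (B * L * (S1p + 2 * S1m * L + S3m * L ^ 2)) / (B - L ^ 2) ^ 2)"

definition Geq :: "complex \<Rightarrow> complex \<Rightarrow> complex \<Rightarrow> complex \<Rightarrow> K" where
  "Geq b1 b2 b3 b4 =
    (let B = cK (BB b1 b2 b3 b4); L = LambdaK;
         S1p = cK (S1 b1 b2 b3 b4);
         S3p = cK (S3 b1 b2 b3 b4);
         S1m = cK (S1 (inverse b1) (inverse b2) (inverse b3) (inverse b4))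
     in - (B * L * (S3p + 2 * S1p * L + S1m * L ^ 2)) / (B - L ^ 2) ^ 2)"

definition muK :: "complex \<Rightarrow> complex \<Rightarrow> complex \<Rightarrow> complex \<Rightarrow> K" where
  "muK b1 b2 b3 b4 =
    (let B = cK (BB b1 b2 b3 b4); L = LambdaK; c = cK
     in L * (L + c (b1 * b2)) * (L + c (b1 * b3)) * (L + c (b1 * b4)) *
            (L + c (b2 * b3)) * (L + c (b2 * b4)) * (L + c (b3 * b4)) / (B - L ^ 2) ^ 4)"

end

theory Submission
  imports Defs "HOL-Computational_Algebra.Polynomial_Factorial"
begin

unbundle fps_syntax



lemma cK_to_fract: "cK z = to_fract [:z:]"
  by (simp add: cK_def to_fract_def)
lemma cK_add: "cK (a + b) = cK a + cK b" unfolding cK_to_fract by (subst to_fract_add[symmetric]) simp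
lemma cK_diff: "cK (a - b) = cK a - cK b" unfolding cK_to_fract by (subst to_fract_diff[symmetric]) simp
lemma cK_mult: "cK (a * b) = cK a * cK b"
  by (simp add: cK_to_fract to_fract_mult[symmetric])
lemma cK_1: "cK 1 = 1" by (simp add: cK_to_fract one_pCons[symmetric])
lemma cK_0: "cK 0 = 0" by (simp add: cK_to_fract)
lemma cK_eq0: "cK a = 0 \<longleftrightarrow> a = 0" by (simp add: cK_to_fract)
lemma cK_inverse: "a \<noteq> 0 \<Longrightarrow> cK (inverse a) = inverse (cK a)"
proof -
  assume "a \<noteq> 0"
  hence "cK (inverse a) * cK a = 1" by (simp add: cK_mult[symmetric] cK_1)
  thus ?thesis by (metis inverse_unique mult.commute)
qed
lemma cK_power: "cK (a ^ n) = cK a ^ n"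
  by (induct n) (simp_all add: cK_1 cK_mult)

lemma LambdaK_to_fract: "LambdaK = to_fract [:0,1:]"
  by (simp add: LambdaK_def to_fract_def)

lemma LambdaK_power: "LambdaK ^ k = to_fract ([:0,1:] ^ k)"
  by (induct k) (simp_all add: LambdaK_to_fract to_fract_mult[symmetric] del: to_fract_mult)

lemma deg_x_pow: "degree (([:0,1:] :: complex poly) ^ k) = k"
  by (simp add: degree_power_eq)

lemma LambdaK_ne0: "LambdaK \<noteq> 0" by (simp add: LambdaK_to_fract)

lemma Lpow_ne_const: "k > 0 \<Longrightarrow> LambdaK ^ k \<noteq> cK c"
proof
  assume k: "k > 0" and e: "LambdaK ^ k = cK c"
  hence "([:0,1:] :: complex poly) ^ k = [:c:]" by (simp add: LambdaK_power cK_to_fract)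
  hence "degree (([:0,1:] :: complex poly) ^ k) = 0" by simp
  with k show False by (simp add: deg_x_pow)
qed

lemma cK_uminus: "cK (- a) = - cK a" unfolding cK_to_fract by (subst to_fract_uminus[symmetric]) simp

lemma lam_pow_ne:
  assumes B: "B \<noteq> 0" and n: "n > 0"
  shows "(LambdaK ^ 2 / cK B) ^ n \<noteq> 1" "(LambdaK ^ 2 / cK B) ^ n \<noteq> -1"
proof -
  have e: "(LambdaK ^ 2 / cK B) ^ n = LambdaK ^ (2*n) / cK (B ^ n)"
    by (simp add: power_divide power_mult cK_power)
  have nz: "cK (B^n) \<noteq> 0" using B by (simp add: cK_eq0)
  have n2: "2*n > 0" using n by simp
  show "(LambdaK ^ 2 / cK B) ^ n \<noteq> 1"
  proof
    assume "(LambdaK ^ 2 / cK B) ^ n = 1"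
    hence "LambdaK ^ (2*n) = cK (B^n)" using nz by (simp add: e divide_eq_eq)
    thus False using Lpow_ne_const[OF n2] by blast
  qed
  show "(LambdaK ^ 2 / cK B) ^ n \<noteq> -1"
  proof
    assume "(LambdaK ^ 2 / cK B) ^ n = -1"
    hence "LambdaK ^ (2*n) = - cK (B^n)" using nz by (simp add: e divide_eq_eq)
    hence "LambdaK ^ (2*n) = cK (-(B^n))" by (simp add: cK_uminus)
    thus False using Lpow_ne_const[OF n2] by blast
  qed
qed

lemma BmL2_ne0: "cK B - LambdaK ^ 2 \<noteq> 0"
  using Lpow_ne_const[of 2 B] by simp




definition sc :: "'a::field \<Rightarrow> 'a fps \<Rightarrow> 'a fps" where
  "sc lam A = Abs_fps (\<lambda>n. lam powi (1 - int n) * A $ n)"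

lemma sc_nth [simp]: "sc lam A $ n = lam powi (1 - int n) * A $ n"
  by (simp add: sc_def)

lemma mult_nth_low:
  fixes a P :: "'a::comm_ring_1 fps"
  assumes "\<forall>k<n. a $ k = 0"
  shows "(a * P) $ n = a $ n * P $ 0"
proof -
  have "(a * P) $ n = (\<Sum>i=0..n. a$i * P$(n - i))" by (rule fps_mult_nth)
  also have "\<dots> = a$n * P$(n-n) + (\<Sum>i\<in>{0..n} - {n}. a$i * P$(n - i))"
    by (subst sum.remove[of _ n]) auto
  also have "(\<Sum>i\<in>{0..n} - {n}. a$i * P$(n - i)) = 0"
    using assms by (intro sum.neutral) auto
  finally show ?thesis by simp
qed

lemma diffE1:
  fixes B A G C A' G' C' x2 u1 u2 u3 u4 :: "'a::idom"
  shows "B*(A*G - x2)*(G*C - x2) - (G-u1)*(G-u2)*(G-u3)*(G-u4)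
     - (B*(A'*G' - x2)*(G'*C' - x2) - (G'-u1)*(G'-u2)*(G'-u3)*(G'-u4))
   = (A-A')*(B*G*(G*C - x2))
     + (G-G')*(B*(A'*(G*C - x2) + (A'*G' - x2)*C)
        - ((G-u2)*(G-u3)*(G-u4) + (G'-u1)*(G-u3)*(G-u4) + (G'-u1)*(G'-u2)*(G-u4)
           + (G'-u1)*(G'-u2)*(G'-u3)))
     + (C-C')*(B*(A'*G' - x2)*G')"
  by algebra

lemma diffE2:
  fixes B G C D G' C' D' x2 v1 v2 v3 v4 :: "'a::idom"
  shows "(G*C - x2)*(D*C - x2) - B*(C-v1)*(C-v2)*(C-v3)*(C-v4)
     - ((G'*C' - x2)*(D'*C' - x2) - B*(C'-v1)*(C'-v2)*(C'-v3)*(C'-v4))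
   = (G-G')*(C*(D*C - x2))
     + (C-C')*(G'*(D*C - x2) + (G'*C' - x2)*D'
        - B*((C-v2)*(C-v3)*(C-v4) + (C'-v1)*(C-v3)*(C-v4) + (C'-v1)*(C'-v2)*(C-v4)
           + (C'-v1)*(C'-v2)*(C'-v3)))
     + (D-D')*((G'*C' - x2)*C)"
  by algebra

lemma powi_aux:
  fixes lam :: "'a::field"
  assumes "lam \<noteq> 0"
  shows "lam powi (1 - int n) * lam ^ n = lam"
  using assms by (simp add: power_int_diff power_int_of_nat)




lemma uniq_step:
  fixes a g L lam B y s :: "'a::field"
  assumes L: "L \<noteq> 0" and lamB: "B*lam = L^2" and sy: "s * y = lam" and lam0: "lam \<noteq> 0"
  and y1: "y \<noteq> 1" and y2: "y \<noteq> -1"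
  and e1: "a * (B*L*(L*lam)) + g * (B*(L*lam + L*lam) - 4*L^3) + s*a*(B*L*L) = 0"
  and e2: "g * (lam*(lam*L*lam)) + s*a*(L*(lam*L*lam) + L*lam*(lam*L) - 4*B*lam^3) + s*g*(L*lam*lam) = 0"
  shows "a = 0 \<and> g = 0"
proof -
  have "0 = y*(a * (B*L*(L*lam)) + g * (B*(L*lam + L*lam) - 4*L^3) + s*a*(B*L*L))" using e1 by simp
  also have "\<dots> = a*L^2*y*(B*lam) + g*y*(2*L*(B*lam) - 4*L^3) + (s*y)*a*B*L*L" by algebra
  also have "\<dots> = a*L^2*y*L^2 + g*y*(2*L*L^2 - 4*L^3) + lam*a*B*L*L" by (simp only: lamB sy)
  also have "\<dots> = a*L^2*y*L^2 + g*y*(2*L*L^2 - 4*L^3) + (B*lam)*a*L*L" by algebra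
  also have "\<dots> = a*L^2*y*L^2 + g*y*(2*L*L^2 - 4*L^3) + L^2*a*L*L" by (simp only: lamB)
  also have "\<dots> = L^3*(L*a*(y+1) - 2*y*g)" by algebra
  finally have h1: "L^3*(L*a*(y+1) - 2*y*g) = 0" by simp
  have "0 = y*(g * (lam*(lam*L*lam)) + s*a*(L*(lam*L*lam) + L*lam*(lam*L) - 4*B*lam^3) + s*g*(L*lam*lam))"
    using e2 by simp
  also have "\<dots> = g*L*lam^3*y + (s*y)*a*(2*L^2*lam^2 - 4*(B*lam)*lam^2) + (s*y)*g*L*lam^2" by algebra
  also have "\<dots> = g*L*lam^3*y + lam*a*(2*L^2*lam^2 - 4*L^2*lam^2) + lam*g*L*lam^2" by (simp only: lamB sy)
  also have "\<dots> = L*lam^3*(g*(y+1) - 2*L*a)" by algebra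
  finally have h2: "L*lam^3*(g*(y+1) - 2*L*a) = 0" by simp
  have h1': "L*a*(y+1) = 2*y*g" using h1 L by simp
  have h2': "g*(y+1) = 2*L*a" using h2 L lam0 by simp
  have "L*a*(y+1)*(y+1) = 2*y*(g*(y+1))" using h1' by simp
  also have "\<dots> = 4*y*L*a" using h2' by simp
  finally have c: "L*a*(y+1)*(y+1) = 4*y*L*a" .
  have "L*a*((y+1)*(y+1) - 4*y) = L*a*(y+1)*(y+1) - 4*y*L*a" by algebra
  hence "L*a*((y+1)*(y+1) - 4*y) = 0" using c by simp
  moreover have "(y+1)*(y+1) - 4*y = (y-1)*(y-1)" by algebra
  ultimately have "L*a*((y-1)*(y-1)) = 0" by simp
  hence a: "a = 0" using L y1 by simp
  have "y + 1 \<noteq> 0"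
  proof
    assume "y + 1 = 0" hence "y = -1" by (simp add: eq_neg_iff_add_eq_0)
    with y2 show False by simp
  qed
  with h2' a have "g = 0" by simp
  with a show ?thesis by simp
qed




lemma uniq:
  fixes A G A' G' :: "'a::field fps" and L b1 b2 b3 b4 k1 k2 k3 k4 lam B :: 'a
  assumes L: "L \<noteq> 0" and lamB: "B*lam = L^2" and lam0: "lam \<noteq> 0"
  and lamn: "\<And>n. n > 0 \<Longrightarrow> lam^n \<noteq> 1 \<and> lam^n \<noteq> -1"
  and E1: "fps_const B * (A*G - fps_X^2) * (G*sc lam A - fps_X^2)
     = (G - fps_const b1 * fps_X)*(G - fps_const b2 * fps_X)*(G - fps_const b3 * fps_X)*(G - fps_const b4 * fps_X)"
  and E2: "(G*sc lam A - fps_X^2) * (sc lam G*sc lam A - fps_X^2)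
     = fps_const B * (sc lam A - fps_const k1 * fps_X)*(sc lam A - fps_const k2 * fps_X)*(sc lam A - fps_const k3 * fps_X)*(sc lam A - fps_const k4 * fps_X)"
  and E1': "fps_const B * (A'*G' - fps_X^2) * (G'*sc lam A' - fps_X^2)
     = (G' - fps_const b1 * fps_X)*(G' - fps_const b2 * fps_X)*(G' - fps_const b3 * fps_X)*(G' - fps_const b4 * fps_X)"
  and E2': "(G'*sc lam A' - fps_X^2) * (sc lam G'*sc lam A' - fps_X^2)
     = fps_const B * (sc lam A' - fps_const k1 * fps_X)*(sc lam A' - fps_const k2 * fps_X)*(sc lam A' - fps_const k3 * fps_X)*(sc lam A' - fps_const k4 * fps_X)"
  and A0: "A $ 0 = 1" and A0': "A' $ 0 = 1" and G0: "G $ 0 = L" and G0': "G' $ 0 = L"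
  shows "A = A' \<and> G = G'"
proof -
  have main: "A $ n = A' $ n \<and> G $ n = G' $ n" for n
  proof (induction n rule: less_induct)
    case (less n)
    show ?case
    proof (cases "n = 0")
      case True thus ?thesis using A0 A0' G0 G0' by simp
    next
      case False
      hence n0: "n > 0" by simp
      define a where "a = A - A'"
      define g where "g = G - G'"
      define c where "c = sc lam A - sc lam A'"
      define d where "d = sc lam G - sc lam G'"
      have la: "\<forall>k<n. a $ k = 0" using less by (simp add: a_def)
      have lg: "\<forall>k<n. g $ k = 0" using less by (simp add: g_def)
      have lc: "\<forall>k<n. c $ k = 0" using less by (simp add: c_def algebra_simps)
      have ld: "\<forall>k<n. d $ k = 0" using less by (simp add: d_def algebra_simps)
      have cn: "c $ n = lam powi (1 - int n) * a $ n" by (simp add: c_def a_def algebra_simps)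
      have dn: "d $ n = lam powi (1 - int n) * g $ n" by (simp add: d_def g_def algebra_simps)
      let ?x2 = "fps_X^2 :: 'a fps"
      let ?C = "sc lam A" and ?C' = "sc lam A'" and ?D = "sc lam G" and ?D' = "sc lam G'"
      let ?u1 = "fps_const b1 * fps_X" and ?u2 = "fps_const b2 * fps_X"
      let ?u3 = "fps_const b3 * fps_X" and ?u4 = "fps_const b4 * fps_X"
      let ?v1 = "fps_const k1 * fps_X" and ?v2 = "fps_const k2 * fps_X"
      let ?v3 = "fps_const k3 * fps_X" and ?v4 = "fps_const k4 * fps_X"
      define P1 where "P1 = fps_const B*G*(G*?C - ?x2)"
      define P2 where "P2 = fps_const B*(A'*(G*?C - ?x2) + (A'*G' - ?x2)*?C)
        - ((G-?u2)*(G-?u3)*(G-?u4) + (G'-?u1)*(G-?u3)*(G-?u4) + (G'-?u1)*(G'-?u2)*(G-?u4)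
           + (G'-?u1)*(G'-?u2)*(G'-?u3))"
      define P3 where "P3 = fps_const B*(A'*G' - ?x2)*G'"
      have z1: "a*P1 + g*P2 + c*P3 = 0"
        unfolding a_def g_def c_def P1_def P2_def P3_def
        by (subst diffE1[symmetric]) (simp add: E1 E1')
      define Q1 where "Q1 = ?C*(?D*?C - ?x2)"
      define Q2 where "Q2 = G'*(?D*?C - ?x2) + (G'*?C' - ?x2)*?D'
        - fps_const B*((?C-?v2)*(?C-?v3)*(?C-?v4) + (?C'-?v1)*(?C-?v3)*(?C-?v4) + (?C'-?v1)*(?C'-?v2)*(?C-?v4)
           + (?C'-?v1)*(?C'-?v2)*(?C'-?v3))"
      define Q3 where "Q3 = (G'*?C' - ?x2)*?C"
      have z2: "g*Q1 + c*Q2 + d*Q3 = 0"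
        unfolding d_def g_def c_def Q1_def Q2_def Q3_def
        by (subst diffE2[symmetric]) (simp add: E2 E2' mult.assoc)
      have n1: "(a*P1 + g*P2 + c*P3) $ n = a$n * P1$0 + g$n * P2$0 + c$n * P3$0"
        using la lg lc by (simp add: mult_nth_low)
      have n2: "(g*Q1 + c*Q2 + d*Q3) $ n = g$n * Q1$0 + c$n * Q2$0 + d$n * Q3$0"
        using lg lc ld by (simp add: mult_nth_low)
      have P10: "P1 $ 0 = B*L*(L*lam)" by (simp add: P1_def G0 A0)
      have P20: "P2 $ 0 = B*(L*lam + L*lam) - 4*L^3"
        by (simp add: P2_def G0 A0 G0' A0' power2_eq_square power3_eq_cube algebra_simps)
      have P30: "P3 $ 0 = B*L*L" by (simp add: P3_def G0' A0')
      have Q10: "Q1 $ 0 = lam*(lam*L*lam)" by (simp add: Q1_def G0 A0)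
      have Q20: "Q2 $ 0 = L*(lam*L*lam) + L*lam*(lam*L) - 4*B*lam^3"
        by (simp add: Q2_def G0 A0 G0' A0' power2_eq_square power3_eq_cube algebra_simps)
      have Q30: "Q3 $ 0 = L*lam*lam" by (simp add: Q3_def G0' A0' A0)
      have e1: "a$n * (B*L*(L*lam)) + g$n * (B*(L*lam + L*lam) - 4*L^3) + (lam powi (1 - int n))*a$n*(B*L*L) = 0"
        using n1 z1 P10 P20 P30 cn by simp
      have e2: "g$n * (lam*(lam*L*lam)) + (lam powi (1 - int n))*a$n*(L*(lam*L*lam) + L*lam*(lam*L) - 4*B*lam^3)
          + (lam powi (1 - int n))*g$n*(L*lam*lam) = 0"
        using n2 z2 Q10 Q20 Q30 cn dn by simp
      have "a$n = 0 \<and> g$n = 0"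
        by (rule uniq_step[OF L lamB powi_aux[OF lam0] lam0 _ _ e1 e2]) (use lamn n0 in auto)
      thus ?thesis by (simp add: a_def g_def)
    qed
  qed
  show ?thesis using main by (simp add: fps_eq_iff)
qed




lemma eq1poly:
  fixes z x L e1 e2 e3 B p r N A G C :: "'a::idom"
  assumes hp: "p = B*e1 + 2*e3*L + e1*L^2"
  and hr: "r = B*e3 + 2*B*e1*L + e3*L^2"
  and hN: "N = L^6 + e2*L^5 + (e1*e3 - B)*L^4 + (e1*e1*B - 2*e2*B + e3*e3)*L^3 + B*(e1*e3-B)*L^2 + B^2*e2*L + B^3"
  and hA: "A = 1 - L*p*z + L*N*z^2"
  and hG: "G = L - L*r*z + B*N*z^2"
  and hC: "C = L^3 - B*L^2*p*z + B^2*N*z^2"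
  and hx: "x = (B - L^2)^2*z"
  shows "B*(A*G - x^2)*(G*C - B*L*x^2) = B*L*(G^4 - e1*G^3*x + e2*G^2*x^2 - e3*G*x^3 + B*x^4)"
  apply (simp only: hA hG hC hx)
  apply (simp only: hp hr hN)
  by algebra

lemma eq2poly:
  fixes z x L e1 e2 e3 B p r N G C Dd :: "'a::idom"
  assumes hp: "p = B*e1 + 2*e3*L + e1*L^2"
  and hr: "r = B*e3 + 2*B*e1*L + e3*L^2"
  and hN: "N = L^6 + e2*L^5 + (e1*e3 - B)*L^4 + (e1*e1*B - 2*e2*B + e3*e3)*L^3 + B*(e1*e3-B)*L^2 + B^2*e2*L + B^3"
  and hG: "G = L - L*r*z + B*N*z^2"
  and hC: "C = L^3 - B*L^2*p*z + B^2*N*z^2"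
  and hD: "Dd = L^5 - B*L^3*r*z + B^3*N*z^2"
  and hx: "x = (B - L^2)^2*z"
  shows "B*(G*C - B*L*x^2)*(Dd*C - B^2*L^3*x^2)
     = B*C^4 - e3*C^3*x*B*L + e2*C^2*x^2*B^2*L^2 - e1*C*x^3*B^3*L^3 + x^4*B^4*L^4"
  apply (simp only: hD hG hC hx)
  apply (simp only: hp hr hN)
  by algebra




lemma ex1:
  fixes X L e1 e2 e3 B p r N w a1 a2 g1 g2 c0 c1 c2 :: "'a::idom"
  assumes hp: "p = B*e1 + 2*e3*L + e1*L^2"
  and hr: "r = B*e3 + 2*B*e1*L + e3*L^2"
  and hN: "N = L^6 + e2*L^5 + (e1*e3 - B)*L^4 + (e1*e1*B - 2*e2*B + e3*e3)*L^3 + B*(e1*e3-B)*L^2 + B^2*e2*L + B^3"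
  and hw: "w*(B-L^2)^2 = 1" and BL: "B*L \<noteq> 0"
  and ha1: "a1 = -(L*p*w)" and ha2: "a2 = L*N*w^2" and hg1: "g1 = -(L*r*w)" and hg2: "g2 = B*N*w^2"
  and hc0: "B*L*c0 = L^3" and hc1: "B*L*c1 = -(B*L^2*p*w)" and hc2: "B*L*c2 = B^2*N*w^2"
  shows "B*((1 + a1*X + a2*X^2)*(L + g1*X + g2*X^2) - X^2)*((L + g1*X + g2*X^2)*(c0 + c1*X + c2*X^2) - X^2)
   = (L + g1*X + g2*X^2)^4 - e1*(L + g1*X + g2*X^2)^3*X + e2*(L + g1*X + g2*X^2)^2*X^2
     - e3*(L + g1*X + g2*X^2)*X^3 + B*X^4"
proof -
  define A where "A = 1 + a1*X + a2*X^2"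
  define G where "G = L + g1*X + g2*X^2"
  define Cs where "Cs = c0 + c1*X + c2*X^2"
  define z where "z = w*X"
  have hx: "X = (B-L^2)^2*z" unfolding z_def
    by (metis hw mult.assoc mult.commute mult_1)
  have hA: "A = 1 - L*p*z + L*N*z^2" unfolding A_def z_def ha1 ha2 by algebra
  have hG: "G = L - L*r*z + B*N*z^2" unfolding G_def z_def hg1 hg2 by algebra
  have "B*L*Cs = B*L*c0 + (B*L*c1)*X + (B*L*c2)*X^2" unfolding Cs_def by algebra
  also have "\<dots> = L^3 - B*L^2*p*z + B^2*N*z^2" unfolding hc0 hc1 hc2 z_def by algebra
  finally have hC: "B*L*Cs = L^3 - B*L^2*p*z + B^2*N*z^2" .
  have e: "B*(A*G - X^2)*(G*(B*L*Cs) - B*L*X^2)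
      = B*L*(G^4 - e1*G^3*X + e2*G^2*X^2 - e3*G*X^3 + B*X^4)"
    by (rule eq1poly[OF hp hr hN hA hG hC hx])
  have "B*(A*G - X^2)*(G*(B*L*Cs) - B*L*X^2) = (B*L)*(B*(A*G - X^2)*(G*Cs - X^2))" by algebra
  with e have "(B*L)*(B*(A*G - X^2)*(G*Cs - X^2)) = (B*L)*(G^4 - e1*G^3*X + e2*G^2*X^2 - e3*G*X^3 + B*X^4)"
    by simp
  with BL have "B*(A*G - X^2)*(G*Cs - X^2) = G^4 - e1*G^3*X + e2*G^2*X^2 - e3*G*X^3 + B*X^4"
    by simp
  thus ?thesis unfolding A_def G_def Cs_def .
qed

lemma ex2:
  fixes X L e1 e2 e3 B p r N w g1 g2 c0 c1 c2 d0 d1 d2 :: "'a::idom"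
  assumes hp: "p = B*e1 + 2*e3*L + e1*L^2"
  and hr: "r = B*e3 + 2*B*e1*L + e3*L^2"
  and hN: "N = L^6 + e2*L^5 + (e1*e3 - B)*L^4 + (e1*e1*B - 2*e2*B + e3*e3)*L^3 + B*(e1*e3-B)*L^2 + B^2*e2*L + B^3"
  and hw: "w*(B-L^2)^2 = 1" and BL: "B*L \<noteq> 0"
  and hg1: "g1 = -(L*r*w)" and hg2: "g2 = B*N*w^2"
  and hc0: "B*L*c0 = L^3" and hc1: "B*L*c1 = -(B*L^2*p*w)" and hc2: "B*L*c2 = B^2*N*w^2"
  and hd0: "B*L^2*d0 = L^5" and hd1: "B*L^2*d1 = -(B*L^3*r*w)" and hd2: "B*L^2*d2 = B^3*N*w^2"
  shows "((L + g1*X + g2*X^2)*(c0 + c1*X + c2*X^2) - X^2)*((d0 + d1*X + d2*X^2)*(c0 + c1*X + c2*X^2) - X^2)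
   = B*(c0 + c1*X + c2*X^2)^4 - e3*(c0 + c1*X + c2*X^2)^3*X + e2*(c0 + c1*X + c2*X^2)^2*X^2
     - e1*(c0 + c1*X + c2*X^2)*X^3 + X^4"
proof -
  define G where "G = L + g1*X + g2*X^2"
  define Cs where "Cs = c0 + c1*X + c2*X^2"
  define Ds where "Ds = d0 + d1*X + d2*X^2"
  define z where "z = w*X"
  have hx: "X = (B-L^2)^2*z" unfolding z_def
    by (metis hw mult.assoc mult.commute mult_1)
  have hG: "G = L - L*r*z + B*N*z^2" unfolding G_def z_def hg1 hg2 by algebra
  have "B*L*Cs = B*L*c0 + (B*L*c1)*X + (B*L*c2)*X^2" unfolding Cs_def by algebra
  also have "\<dots> = L^3 - B*L^2*p*z + B^2*N*z^2" unfolding hc0 hc1 hc2 z_def by algebra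
  finally have hC: "B*L*Cs = L^3 - B*L^2*p*z + B^2*N*z^2" .
  have "B*L^2*Ds = B*L^2*d0 + (B*L^2*d1)*X + (B*L^2*d2)*X^2" unfolding Ds_def by algebra
  also have "\<dots> = L^5 - B*L^3*r*z + B^3*N*z^2" unfolding hd0 hd1 hd2 z_def by algebra
  finally have hD: "B*L^2*Ds = L^5 - B*L^3*r*z + B^3*N*z^2" .
  have e: "B*(G*(B*L*Cs) - B*L*X^2)*((B*L^2*Ds)*(B*L*Cs) - B^2*L^3*X^2)
     = B*(B*L*Cs)^4 - e3*(B*L*Cs)^3*X*B*L + e2*(B*L*Cs)^2*X^2*B^2*L^2 - e1*(B*L*Cs)*X^3*B^3*L^3 + X^4*B^4*L^4"
    by (rule eq2poly[OF hp hr hN hG hC hD hx])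
  have l: "B*(G*(B*L*Cs) - B*L*X^2)*((B*L^2*Ds)*(B*L*Cs) - B^2*L^3*X^2)
     = (B*L)^4*((G*Cs - X^2)*(Ds*Cs - X^2))" by algebra
  have r: "B*(B*L*Cs)^4 - e3*(B*L*Cs)^3*X*B*L + e2*(B*L*Cs)^2*X^2*B^2*L^2 - e1*(B*L*Cs)*X^3*B^3*L^3 + X^4*B^4*L^4
     = (B*L)^4*(B*Cs^4 - e3*Cs^3*X + e2*Cs^2*X^2 - e1*Cs*X^3 + X^4)" by algebra
  from e l r have "(B*L)^4*((G*Cs - X^2)*(Ds*Cs - X^2)) = (B*L)^4*(B*Cs^4 - e3*Cs^3*X + e2*Cs^2*X^2 - e1*Cs*X^3 + X^4)"
    by simp
  with BL have "(G*Cs - X^2)*(Ds*Cs - X^2) = B*Cs^4 - e3*Cs^3*X + e2*Cs^2*X^2 - e1*Cs*X^3 + X^4"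
    by simp
  thus ?thesis unfolding G_def Cs_def Ds_def .
qed

lemma prod4:
  fixes g x b1 b2 b3 b4 :: "'a::idom"
  shows "(g - b1*x)*(g - b2*x)*(g - b3*x)*(g - b4*x)
    = g^4 - (b1+b2+b3+b4)*g^3*x
      + (b1*b2+b1*b3+b1*b4+b2*b3+b2*b4+b3*b4)*g^2*x^2
      - (b1*b2*b3+b1*b2*b4+b1*b3*b4+b2*b3*b4)*g*x^3 + b1*b2*b3*b4*x^4"
  by algebra




lemma quad_nth:
  "(fps_const c0 + fps_const c1 * fps_X + fps_const c2 * fps_X^2 :: 'a::comm_ring_1 fps) $ n
    = (if n = 0 then c0 else if n = 1 then c1 else if n = 2 then c2 else 0)"
  by (simp add: fps_X_power_nth)

lemma sc_quad:
  fixes lam c0 c1 c2 :: "'a::field"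
  assumes "lam \<noteq> 0"
  shows "sc lam (fps_const c0 + fps_const c1 * fps_X + fps_const c2 * fps_X^2)
       = fps_const (lam*c0) + fps_const c1 * fps_X + fps_const (c2/lam) * fps_X^2"
  using assms by (intro fps_ext) (auto simp: quad_nth power_int_minus field_simps)




lemma fc: "fps_const (a*b) = fps_const a * fps_const b" "fps_const (a+b) = fps_const a + fps_const b"
  "fps_const (a-b) = fps_const a - fps_const (b::'a::comm_ring_1)" "fps_const (-a) = - fps_const a"
  "fps_const (a^n) = fps_const a ^ n"
  by simp_all

lemma exist:
  fixes L b1 b2 b3 b4 :: "'a::field"
  assumes b: "b1 \<noteq> 0" "b2 \<noteq> 0" "b3 \<noteq> 0" "b4 \<noteq> 0" and L: "L \<noteq> 0"
  and D: "b1*b2*b3*b4 - L^2 \<noteq> 0"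
  defines "B \<equiv> b1*b2*b3*b4"
  defines "lam \<equiv> L^2/B"
  defines "e1 \<equiv> b1+b2+b3+b4"
  defines "e2 \<equiv> b1*b2+b1*b3+b1*b4+b2*b3+b2*b4+b3*b4"
  defines "e3 \<equiv> b1*b2*b3+b1*b2*b4+b1*b3*b4+b2*b3*b4"
  defines "p \<equiv> B*e1 + 2*e3*L + e1*L^2"
  defines "r \<equiv> B*e3 + 2*B*e1*L + e3*L^2"
  defines "N \<equiv> L^6 + e2*L^5 + (e1*e3 - B)*L^4 + (e1*e1*B - 2*e2*B + e3*e3)*L^3 + B*(e1*e3-B)*L^2 + B^2*e2*L + B^3"
  defines "w \<equiv> inverse ((B - L^2)^2)"
  defines "a1 \<equiv> -(L*p*w)" and "a2 \<equiv> L*N*w^2" and "g1 \<equiv> -(L*r*w)" and "g2 \<equiv> B*N*w^2"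
  defines "As \<equiv> 1 + fps_const a1 * fps_X + fps_const a2 * fps_X^2"
  defines "Gs \<equiv> fps_const L + fps_const g1 * fps_X + fps_const g2 * fps_X^2"
  shows "fps_const B * (As*Gs - fps_X^2) * (Gs*sc lam As - fps_X^2)
     = (Gs - fps_const b1 * fps_X)*(Gs - fps_const b2 * fps_X)*(Gs - fps_const b3 * fps_X)*(Gs - fps_const b4 * fps_X)"
    and "(Gs*sc lam As - fps_X^2) * (sc lam Gs*sc lam As - fps_X^2)
     = fps_const B * (sc lam As - fps_const (inverse b1) * fps_X)*(sc lam As - fps_const (inverse b2) * fps_X)
        *(sc lam As - fps_const (inverse b3) * fps_X)*(sc lam As - fps_const (inverse b4) * fps_X)"
proof -
  have B0: "B \<noteq> 0" using b by (simp add: B_def)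
  have lam0: "lam \<noteq> 0" using B0 L by (simp add: lam_def)
  have D': "B - L^2 \<noteq> 0" using D by (simp add: B_def)
  have As': "As = fps_const 1 + fps_const a1 * fps_X + fps_const a2 * fps_X^2" by (simp add: As_def)
  have scA: "sc lam As = fps_const lam + fps_const a1 * fps_X + fps_const (a2/lam) * fps_X^2"
    using sc_quad[OF lam0, of 1 a1 a2] by (simp add: As')
  have scG: "sc lam Gs = fps_const (lam*L) + fps_const g1 * fps_X + fps_const (g2/lam) * fps_X^2"
    using sc_quad[OF lam0, of L g1 g2] by (simp add: Gs_def)
  let ?c = "fps_const :: 'a \<Rightarrow> 'a fps"
  have hp: "?c p = ?c B * ?c e1 + 2 * ?c e3 * ?c L + ?c e1 * ?c L ^ 2"
    by (simp add: p_def numeral_fps_const)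
  have hr: "?c r = ?c B * ?c e3 + 2 * ?c B * ?c e1 * ?c L + ?c e3 * ?c L ^ 2"
    by (simp add: r_def numeral_fps_const)
  have hN: "?c N = ?c L^6 + ?c e2*?c L^5 + (?c e1*?c e3 - ?c B)*?c L^4
      + (?c e1*?c e1*?c B - 2*?c e2*?c B + ?c e3*?c e3)*?c L^3 + ?c B*(?c e1*?c e3-?c B)*?c L^2
      + ?c B^2*?c e2*?c L + ?c B^3"
    by (simp add: N_def numeral_fps_const)
  have hw: "?c w * (?c B - ?c L^2)^2 = 1" using D' by (simp add: w_def)
  have BL: "?c B * ?c L \<noteq> 0" using B0 L by simp
  have ha1: "?c a1 = -(?c L * ?c p * ?c w)" by (simp add: a1_def)
  have ha2: "?c a2 = ?c L * ?c N * ?c w ^ 2" by (simp add: a2_def)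
  have hg1: "?c g1 = -(?c L * ?c r * ?c w)" by (simp add: g1_def)
  have hg2: "?c g2 = ?c B * ?c N * ?c w ^ 2" by (simp add: g2_def)
  have hc0: "?c B * ?c L * ?c lam = ?c L ^ 3" using B0 by (simp add: lam_def power2_eq_square power3_eq_cube)
  have hc1: "?c B * ?c L * ?c a1 = -(?c B * ?c L^2 * ?c p * ?c w)" by (simp add: a1_def power2_eq_square)
  have hc2: "?c B * ?c L * ?c (a2/lam) = ?c B ^ 2 * ?c N * ?c w ^ 2"
    using B0 L by (simp add: a2_def lam_def power2_eq_square field_simps)
  have hd0: "?c B * ?c L^2 * ?c (lam*L) = ?c L ^ 5" using B0 by (simp add: lam_def field_simps power_Suc[symmetric] del: power_Suc)
  have hd1: "?c B * ?c L^2 * ?c g1 = -(?c B * ?c L^3 * ?c r * ?c w)" by (simp add: g1_def power2_eq_square power3_eq_cube)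
  have hd2: "?c B * ?c L^2 * ?c (g2/lam) = ?c B ^ 3 * ?c N * ?c w ^ 2"
    using B0 L by (simp add: g2_def lam_def power2_eq_square power3_eq_cube field_simps)
  note X1 = ex1[OF hp hr hN hw BL ha1 ha2 hg1 hg2 hc0 hc1 hc2, of fps_X]
  note X2 = ex2[OF hp hr hN hw BL hg1 hg2 hc0 hc1 hc2 hd0 hd1 hd2, of fps_X]
  have P: "(Gs - ?c b1 * fps_X)*(Gs - ?c b2 * fps_X)*(Gs - ?c b3 * fps_X)*(Gs - ?c b4 * fps_X)
      = Gs^4 - ?c e1 * Gs^3 * fps_X + ?c e2 * Gs^2 * fps_X^2 - ?c e3 * Gs * fps_X^3 + ?c B * fps_X^4"
    unfolding prod4 by (simp add: e1_def e2_def e3_def B_def)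
  show "fps_const B * (As*Gs - fps_X^2) * (Gs*sc lam As - fps_X^2)
     = (Gs - fps_const b1 * fps_X)*(Gs - fps_const b2 * fps_X)*(Gs - fps_const b3 * fps_X)*(Gs - fps_const b4 * fps_X)"
    unfolding P scA unfolding As_def Gs_def by (rule X1)
  define Cs where "Cs = fps_const lam + fps_const a1 * fps_X + fps_const (a2/lam) * fps_X^2"
  have K1: "B*(inverse b1 + inverse b2 + inverse b3 + inverse b4) = e3"
    using b by (simp add: B_def e3_def field_simps)
  have K2: "B*(inverse b1*inverse b2 + inverse b1*inverse b3 + inverse b1*inverse b4 + inverse b2*inverse b3
     + inverse b2*inverse b4 + inverse b3*inverse b4) = e2"
    using b by (simp add: B_def e2_def field_simps)
  have K3: "B*(inverse b1*inverse b2*inverse b3 + inverse b1*inverse b2*inverse b4 + inverse b1*inverse b3*inverse b4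
     + inverse b2*inverse b3*inverse b4) = e1"
    using b by (simp add: B_def e1_def field_simps)
  have K4: "B*(inverse b1*inverse b2*inverse b3*inverse b4) = 1"
    using b by (simp add: B_def field_simps)
  have F1: "?c B * (?c (inverse b1) + ?c (inverse b2) + ?c (inverse b3) + ?c (inverse b4)) = ?c e3"
    using K1 by simp
  have F2: "?c B * (?c (inverse b1)*?c (inverse b2) + ?c (inverse b1)*?c (inverse b3) + ?c (inverse b1)*?c (inverse b4)
     + ?c (inverse b2)*?c (inverse b3) + ?c (inverse b2)*?c (inverse b4) + ?c (inverse b3)*?c (inverse b4)) = ?c e2"
    using K2 by simp
  have F3: "?c B * (?c (inverse b1)*?c (inverse b2)*?c (inverse b3) + ?c (inverse b1)*?c (inverse b2)*?c (inverse b4)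
     + ?c (inverse b1)*?c (inverse b3)*?c (inverse b4) + ?c (inverse b2)*?c (inverse b3)*?c (inverse b4)) = ?c e1"
    using K3 by simp
  have F4: "?c B * (?c (inverse b1)*?c (inverse b2)*?c (inverse b3)*?c (inverse b4)) = 1"
    using K4 by (metis fps_const_1_eq_1 fps_const_mult)
  have Q: "?c B * (Cs - ?c (inverse b1) * fps_X)*(Cs - ?c (inverse b2) * fps_X)
        *(Cs - ?c (inverse b3) * fps_X)*(Cs - ?c (inverse b4) * fps_X)
      = ?c B * Cs^4 - ?c e3 * Cs^3 * fps_X + ?c e2 * Cs^2 * fps_X^2 - ?c e1 * Cs * fps_X^3 + fps_X^4"
  proof -
    have h: "(fps_X::'a fps)^4 = ?c B * (?c (inverse b1)*?c (inverse b2)*?c (inverse b3)*?c (inverse b4)) * fps_X^4"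
      using F4 by simp
    show ?thesis
      unfolding F1[symmetric] F2[symmetric] F3[symmetric]
      apply (subst h)
      unfolding mult.assoc[symmetric] prod4 by algebra
  qed
  show "(Gs*sc lam As - fps_X^2) * (sc lam Gs*sc lam As - fps_X^2)
     = fps_const B * (sc lam As - fps_const (inverse b1) * fps_X)*(sc lam As - fps_const (inverse b2) * fps_X)
        *(sc lam As - fps_const (inverse b3) * fps_X)*(sc lam As - fps_const (inverse b4) * fps_X)"
    unfolding scA scG Cs_def[symmetric] Q unfolding Cs_def Gs_def by (rule X2)
qed




lemma master:
  fixes L b1 b2 b3 b4 :: "'a::field" and A G :: "'a fps"
  assumes b: "b1 \<noteq> 0" "b2 \<noteq> 0" "b3 \<noteq> 0" "b4 \<noteq> 0" and L: "L \<noteq> 0"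
  and D: "b1*b2*b3*b4 - L^2 \<noteq> 0"
  defines "B \<equiv> b1*b2*b3*b4"
  defines "lam \<equiv> L^2/B"
  defines "e1 \<equiv> b1+b2+b3+b4"
  defines "e2 \<equiv> b1*b2+b1*b3+b1*b4+b2*b3+b2*b4+b3*b4"
  defines "e3 \<equiv> b1*b2*b3+b1*b2*b4+b1*b3*b4+b2*b3*b4"
  defines "p \<equiv> B*e1 + 2*e3*L + e1*L^2"
  defines "r \<equiv> B*e3 + 2*B*e1*L + e3*L^2"
  defines "N \<equiv> L^6 + e2*L^5 + (e1*e3 - B)*L^4 + (e1*e1*B - 2*e2*B + e3*e3)*L^3 + B*(e1*e3-B)*L^2 + B^2*e2*L + B^3"
  defines "w \<equiv> inverse ((B - L^2)^2)"
  defines "a1 \<equiv> -(L*p*w)" and "a2 \<equiv> L*N*w^2" and "g1 \<equiv> -(L*r*w)" and "g2 \<equiv> B*N*w^2"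
  defines "As \<equiv> 1 + fps_const a1 * fps_X + fps_const a2 * fps_X^2"
  defines "Gs \<equiv> fps_const L + fps_const g1 * fps_X + fps_const g2 * fps_X^2"
  assumes lamn: "\<And>n. n > 0 \<Longrightarrow> lam^n \<noteq> 1 \<and> lam^n \<noteq> -1"
  and E1: "fps_const B * (A*G - fps_X^2) * (G*sc lam A - fps_X^2)
     = (G - fps_const b1 * fps_X)*(G - fps_const b2 * fps_X)*(G - fps_const b3 * fps_X)*(G - fps_const b4 * fps_X)"
  and E2: "(G*sc lam A - fps_X^2) * (sc lam G*sc lam A - fps_X^2)
     = fps_const B * (sc lam A - fps_const (inverse b1) * fps_X)*(sc lam A - fps_const (inverse b2) * fps_X)
        *(sc lam A - fps_const (inverse b3) * fps_X)*(sc lam A - fps_const (inverse b4) * fps_X)"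
  and A0: "A $ 0 = 1" and G0: "G $ 0 = L"
  shows "A = As \<and> G = Gs"
proof -
  have B0: "B \<noteq> 0" using b by (simp add: B_def)
  have lam0: "lam \<noteq> 0" using B0 L by (simp add: lam_def)
  have lamB: "B*lam = L^2" using B0 by (simp add: lam_def)
  note X = exist[OF b L D]
  show ?thesis
    apply (rule uniq[OF L lamB lam0 lamn E1 E2 _ _ A0 _ G0])
    using X unfolding As_def Gs_def a1_def a2_def g1_def g2_def w_def N_def p_def r_def e1_def e2_def e3_def lam_def B_def
    by (simp_all add: fps_X_power_nth)
qed




lemma phi_scale_nth [simp]: "phi_scale lam x $$ j = lam powi (- j) * x $$ j"
  unfolding phi_scale_def
  by (rule nth_Abs_fls_lower_bound[of "fls_subdegree x"]) simp

lemma phi_scale_0 [simp]: "phi_scale lam 0 = 0"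
  by (intro fls_eqI) simp

lemma qshift_nth: "qshift q lam f $ n = fls_const (cK q ^ n) * phi_scale lam (f $ n)"
  by (simp add: qshift_def)

lemma shift1:
  fixes f :: "'a::comm_ring_1 fps"
  assumes "f $ 0 = 0" shows "f = fps_X * fps_shift 1 f"
proof (intro fps_ext)
  fix n show "f $ n = (fps_X * fps_shift 1 f) $ n"
    using assms by (cases n) (simp_all add: fps_X_mult_nth)
qed

lemma Xinv_mult_nth:
  fixes x :: "'a::comm_ring_1 fls"
  shows "(fls_X_inv * x) $$ j = x $$ (j + 1)"
  by (simp add: fls_X_inv_times_conv_shift)

lemma rep:
  fixes x :: "'a::comm_ring_1 fls"
  assumes "\<forall>j < -1. x $$ j = 0"
  shows "x = fls_X_inv * fps_to_fls (Abs_fps (\<lambda>n. x $$ (int n - 1)))"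
  using assms by (intro fls_eqI) (auto simp: Xinv_mult_nth)

lemma phi_rep:
  fixes A :: "K fps"
  shows "phi_scale lam (fls_X_inv * fps_to_fls A) = fls_X_inv * fps_to_fls (sc lam A)"
proof (intro fls_eqI)
  fix j :: int
  show "phi_scale lam (fls_X_inv * fps_to_fls A) $$ j = (fls_X_inv * fps_to_fls (sc lam A)) $$ j"
  proof (cases "j + 1 < 0")
    case True thus ?thesis by (simp add: Xinv_mult_nth)
  next
    case False
    hence "1 - int (nat (j+1)) = - j" by simp
    with False show ?thesis by (simp add: Xinv_mult_nth)
  qed
qed

lemma XinvX: "(fls_X_inv :: 'a::field fls) * fls_X = 1"
  by (simp add: fls_X_inv_times_conv_shift fls_X_conv_shift_1)




lemma c4L:
  fixes u v w y z :: "'a::field fps"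
  assumes "u$0 = 0" "v$0 = 0" "w$0 = 0" "y$0 = 0" "z$0 = 0"
  shows "((u*v - fps_const P * fps_X^2)*(w*y - fps_const Q*fps_X^2)*(z - fps_const c5)*(z - fps_const c6)
     *(z - fps_const c7)*(z - fps_const c8)) $ 4 = (u$1*v$1 - P)*(w$1*y$1 - Q)*(-c5)*(-c6)*(-c7)*(-c8)"
proof -
  define u' where "u' = fps_shift 1 u"
  define v' where "v' = fps_shift 1 v"
  define w' where "w' = fps_shift 1 w"
  define y' where "y' = fps_shift 1 y"
  define z' where "z' = fps_shift 1 z"
  have hu: "u = fps_X * u'" unfolding u'_def by (rule shift1[OF assms(1)])
  have hv: "v = fps_X * v'" unfolding v'_def by (rule shift1[OF assms(2)])
  have hw: "w = fps_X * w'" unfolding w'_def by (rule shift1[OF assms(3)])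
  have hy: "y = fps_X * y'" unfolding y'_def by (rule shift1[OF assms(4)])
  have hz: "z = fps_X * z'" unfolding z'_def by (rule shift1[OF assms(5)])
  have e: "(u*v - fps_const P * fps_X^2)*(w*y - fps_const Q*fps_X^2)*(z - fps_const c5)*(z - fps_const c6)
     *(z - fps_const c7)*(z - fps_const c8) = fps_X^4 * ((u'*v' - fps_const P)*(w'*y' - fps_const Q)
     *(fps_X*z' - fps_const c5)*(fps_X*z' - fps_const c6)*(fps_X*z' - fps_const c7)*(fps_X*z' - fps_const c8))"
    unfolding hu hv hw hy hz by algebra
  show ?thesis unfolding e fps_X_power_mult_nth
    by (simp add: u'_def v'_def w'_def y'_def)
qed

lemma c4R:
  fixes u v w y z :: "'a::field fps"
  assumes "u$0 = 0" "v$0 = 0" "w$0 = 0" "y$0 = 0" "z$0 = 0"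
  shows "((u*v - 1)*(w*y - 1)*(z - fps_const c1 * fps_X)*(z - fps_const c2*fps_X)
     *(z - fps_const c3*fps_X)*(z - fps_const c4*fps_X)) $ 4 = (z$1 - c1)*(z$1 - c2)*(z$1 - c3)*(z$1 - c4)"
proof -
  define z' where "z' = fps_shift 1 z"
  have hz: "z = fps_X * z'" unfolding z'_def by (rule shift1[OF assms(5)])
  have e: "(u*v - 1)*(w*y - 1)*(z - fps_const c1 * fps_X)*(z - fps_const c2*fps_X)
     *(z - fps_const c3*fps_X)*(z - fps_const c4*fps_X) = fps_X^4 * ((u*v - 1)*(w*y - 1)
     *(z' - fps_const c1)*(z' - fps_const c2)*(z' - fps_const c3)*(z' - fps_const c4))"
    unfolding hz by algebra
  show ?thesis unfolding e fps_X_power_mult_nth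
    using assms by (simp add: z'_def)
qed




lemma Kids:
  fixes L b1 b2 b3 b4 :: "'a::field"
  assumes b: "b1 \<noteq> 0" "b2 \<noteq> 0" "b3 \<noteq> 0" "b4 \<noteq> 0" and L: "L \<noteq> 0"
  and D: "b1*b2*b3*b4 - L^2 \<noteq> 0"
  defines "B \<equiv> b1*b2*b3*b4"
  defines "e1 \<equiv> b1+b2+b3+b4"
  defines "e2 \<equiv> b1*b2+b1*b3+b1*b4+b2*b3+b2*b4+b3*b4"
  defines "e3 \<equiv> b1*b2*b3+b1*b2*b4+b1*b3*b4+b2*b3*b4"
  defines "p \<equiv> B*e1 + 2*e3*L + e1*L^2"
  defines "r \<equiv> B*e3 + 2*B*e1*L + e3*L^2"
  defines "N \<equiv> L^6 + e2*L^5 + (e1*e3 - B)*L^4 + (e1*e1*B - 2*e2*B + e3*e3)*L^3 + B*(e1*e3-B)*L^2 + B^2*e2*L + B^3"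
  defines "w \<equiv> inverse ((B - L^2)^2)"
  defines "S1m \<equiv> inverse b1 + inverse b2 + inverse b3 + inverse b4"
  defines "S3m \<equiv> inverse b1 * inverse b2 * inverse b3 + inverse b1 * inverse b2 * inverse b4
     + inverse b1 * inverse b3 * inverse b4 + inverse b2 * inverse b3 * inverse b4"
  defines "mu \<equiv> L * (L + b1*b2) * (L + b1*b3) * (L + b1*b4) * (L + b2*b3) * (L + b2*b4) * (L + b3*b4) / (B - L^2)^4"
  shows "-(L*p*w) = - (B * L * (e1 + 2 * S1m * L + S3m * L ^ 2)) / (B - L ^ 2) ^ 2"
    and "-(L*r*w) = - (B * L * (e3 + 2 * e1 * L + S1m * L ^ 2)) / (B - L ^ 2) ^ 2"
    and "L*N*w^2 = mu"
    and "B*N*w^2 = B / L * mu"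
proof -
  have B0: "B \<noteq> 0" using b by (simp add: B_def)
  have D': "B - L^2 \<noteq> 0" using D by (simp add: B_def)
  have h1: "B*S1m = e3" using b by (simp add: B_def S1m_def e3_def field_simps)
  have h3: "B*S3m = e1" using b by (simp add: B_def S3m_def e1_def field_simps)
  have "B * (e1 + 2 * S1m * L + S3m * L ^ 2) = B*e1 + 2*(B*S1m)*L + (B*S3m)*L^2" by algebra
  hence hp: "B * (e1 + 2 * S1m * L + S3m * L ^ 2) = p" unfolding h1 h3 p_def by simp
  show "-(L*p*w) = - (B * L * (e1 + 2 * S1m * L + S3m * L ^ 2)) / (B - L ^ 2) ^ 2"
  proof -
    have "B * L * (e1 + 2 * S1m * L + S3m * L ^ 2) = L * p" using hp by (metis mult.assoc mult.commute)
    note z = this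
    show ?thesis unfolding w_def divide_inverse z by simp
  qed
  have "B * (e3 + 2 * e1 * L + S1m * L ^ 2) = B*e3 + 2*B*e1*L + (B*S1m)*L^2" by algebra
  hence hr: "B * (e3 + 2 * e1 * L + S1m * L ^ 2) = r" unfolding h1 r_def by simp
  show "-(L*r*w) = - (B * L * (e3 + 2 * e1 * L + S1m * L ^ 2)) / (B - L ^ 2) ^ 2"
  proof -
    have "B * L * (e3 + 2 * e1 * L + S1m * L ^ 2) = L * r" using hr by (metis mult.assoc mult.commute)
    note z = this
    show ?thesis unfolding w_def divide_inverse z by simp
  qed
  have hN: "N = (L + b1*b2) * (L + b1*b3) * (L + b1*b4) * (L + b2*b3) * (L + b2*b4) * (L + b3*b4)"
    unfolding N_def e1_def e2_def e3_def B_def by algebra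
  show m: "L*N*w^2 = mu"
    unfolding mu_def hN w_def using D'
    by (simp add: field_simps power_mult[symmetric])
  show "B*N*w^2 = B / L * mu"
    unfolding m[symmetric] using L by simp
qed




lemma conv1:
  fixes Ah Gh Ch Xi Xl Bc c1 c2 c3 c4 :: "'a::field"
  assumes X: "Xi*Xl = 1"
  and R: "Bc*((Xi*Gh)*(Xi*Ah) - 1)*((Xi*Gh)*(Xi*Ch) - 1) = (Xi*Gh - c1)*(Xi*Gh - c2)*(Xi*Gh - c3)*(Xi*Gh - c4)"
  shows "Bc*(Ah*Gh - Xl^2)*(Gh*Ch - Xl^2) = (Gh - c1*Xl)*(Gh - c2*Xl)*(Gh - c3*Xl)*(Gh - c4*Xl)"
proof -
  have "Bc*(Ah*Gh - Xl^2)*(Gh*Ch - Xl^2) = Xl^4 * (Bc*((Xi*Gh)*(Xi*Ah) - 1)*((Xi*Gh)*(Xi*Ch) - 1))"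
    using X by algebra
  also have "\<dots> = Xl^4 * ((Xi*Gh - c1)*(Xi*Gh - c2)*(Xi*Gh - c3)*(Xi*Gh - c4))" by (simp only: R)
  also have "\<dots> = (Gh - c1*Xl)*(Gh - c2*Xl)*(Gh - c3*Xl)*(Gh - c4*Xl)" using X by algebra
  finally show ?thesis .
qed

lemma conv2:
  fixes Gh Ch Dh Xi Xl Bc c1 c2 c3 c4 :: "'a::field"
  assumes X: "Xi*Xl = 1"
  and R: "((Xi*Gh)*(Xi*Ch) - 1)*((Xi*Dh)*(Xi*Ch) - 1) = Bc*(Xi*Ch - c1)*(Xi*Ch - c2)*(Xi*Ch - c3)*(Xi*Ch - c4)"
  shows "(Gh*Ch - Xl^2)*(Dh*Ch - Xl^2) = Bc*(Ch - c1*Xl)*(Ch - c2*Xl)*(Ch - c3*Xl)*(Ch - c4*Xl)"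
proof -
  have "(Gh*Ch - Xl^2)*(Dh*Ch - Xl^2) = Xl^4 * (((Xi*Gh)*(Xi*Ch) - 1)*((Xi*Dh)*(Xi*Ch) - 1))"
    using X by algebra
  also have "\<dots> = Xl^4 * (Bc*(Xi*Ch - c1)*(Xi*Ch - c2)*(Xi*Ch - c3)*(Xi*Ch - c4))" by (simp only: R)
  also have "\<dots> = Bc*(Ch - c1*Xl)*(Ch - c2*Xl)*(Ch - c3*Xl)*(Ch - c4*Xl)" using X by algebra
  finally show ?thesis .
qed




theorem mainTheorem5:
  fixes b1 b2 b3 b4 b5 b6 b7 b8 :: complex and f g :: S
  assumes "b1 \<noteq> 0" "b2 \<noteq> 0" "b3 \<noteq> 0" "b4 \<noteq> 0"
      and "b5 \<noteq> 0" "b6 \<noteq> 0" "b7 \<noteq> 0" "b8 \<noteq> 0"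
      and sol: "formal_solution b1 b2 b3 b4 b5 b6 b7 b8 f g"
      and F11: "coeffF f 1 1 = 1"
      and G11: "coeffF g 1 1 = LambdaK"
  shows "(f $ 1 = fls_X_inv + fls_const (Feq b1 b2 b3 b4)
                 + fls_const (muK b1 b2 b3 b4) * fls_X) \<and>
         (g $ 1 = fls_const LambdaK * fls_X_inv + fls_const (Geq b1 b2 b3 b4)
                 + fls_const (cK (BB b1 b2 b3 b4) / LambdaK * muK b1 b2 b3 b4) * fls_X) \<and>
         (\<forall>i::int. i \<le> -2 \<longrightarrow> coeffF f 1 i = 0 \<and> coeffF g 1 i = 0)"
proof -
  note bnz = assms(1-8)
  define q where "q = qq b1 b2 b3 b4 b5 b6 b7 b8"
  define lam where "lam = lamK (BB b1 b2 b3 b4)"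
  define fb where "fb = qshift q lam f"
  define gb where "gb = qshift q lam g"
  define Bk where "Bk = cK b1 * cK b2 * cK b3 * cK b4"
  have lam_eq: "lam = LambdaK^2 / Bk"
    by (simp add: lam_def lamK_def Bk_def BB_def cK_mult)
  have sol': "f $ 0 = 0 \<and> g $ 0 = 0 \<and>
         (\<forall>n::nat. \<forall>i::int. i > int n \<longrightarrow> (f $ n) $$ (- i) = 0 \<and> (g $ n) $$ (- i) = 0) \<and>
         (g * f - fps_X ^ 2) * (g * fb - fps_const (fls_const (cK q)) * fps_X ^ 2) *
            (g - fps_const (fls_const (cK b5))) * (g - fps_const (fls_const (cK b6)))
            * (g - fps_const (fls_const (cK b7))) * (g - fps_const (fls_const (cK b8)))
          = (g * f - 1) * (g * fb - 1) *
            (g - fps_const (fls_const (cK b1)) * fps_X) * (g - fps_const (fls_const (cK b2)) * fps_X)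
            * (g - fps_const (fls_const (cK b3)) * fps_X) * (g - fps_const (fls_const (cK b4)) * fps_X) \<and>
         (g * fb - fps_const (fls_const (cK q)) * fps_X ^ 2) * (gb * fb - fps_const (fls_const (cK (q^2))) * fps_X ^ 2) *
            (fb - fps_const (fls_const (cK (inverse b5)))) * (fb - fps_const (fls_const (cK (inverse b6))))
            * (fb - fps_const (fls_const (cK (inverse b7)))) * (fb - fps_const (fls_const (cK (inverse b8))))
          = (g * fb - 1) * (gb * fb - 1) *
            (fb - fps_const (fls_const (cK (inverse b1 * q))) * fps_X) * (fb - fps_const (fls_const (cK (inverse b2 * q))) * fps_X) *
            (fb - fps_const (fls_const (cK (inverse b3 * q))) * fps_X) * (fb - fps_const (fls_const (cK (inverse b4 * q))) * fps_X)"
    using sol unfolding formal_solution_def Let_def q_def lam_def fb_def gb_def cS_def by simp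
  then obtain f0: "f $ 0 = 0" and g0: "g $ 0 = 0"
    and van: "\<forall>n::nat. \<forall>i::int. i > int n \<longrightarrow> (f $ n) $$ (- i) = 0 \<and> (g $ n) $$ (- i) = 0"
    and EA: "(g * f - fps_X ^ 2) * (g * fb - fps_const (fls_const (cK q)) * fps_X ^ 2) *
            (g - fps_const (fls_const (cK b5))) * (g - fps_const (fls_const (cK b6)))
            * (g - fps_const (fls_const (cK b7))) * (g - fps_const (fls_const (cK b8)))
          = (g * f - 1) * (g * fb - 1) *
            (g - fps_const (fls_const (cK b1)) * fps_X) * (g - fps_const (fls_const (cK b2)) * fps_X)
            * (g - fps_const (fls_const (cK b3)) * fps_X) * (g - fps_const (fls_const (cK b4)) * fps_X)"
    and EB: "(g * fb - fps_const (fls_const (cK q)) * fps_X ^ 2) * (gb * fb - fps_const (fls_const (cK (q^2))) * fps_X ^ 2) *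
            (fb - fps_const (fls_const (cK (inverse b5)))) * (fb - fps_const (fls_const (cK (inverse b6))))
            * (fb - fps_const (fls_const (cK (inverse b7)))) * (fb - fps_const (fls_const (cK (inverse b8))))
          = (g * fb - 1) * (gb * fb - 1) *
            (fb - fps_const (fls_const (cK (inverse b1 * q))) * fps_X) * (fb - fps_const (fls_const (cK (inverse b2 * q))) * fps_X) *
            (fb - fps_const (fls_const (cK (inverse b3 * q))) * fps_X) * (fb - fps_const (fls_const (cK (inverse b4 * q))) * fps_X)"
    by blast
  have fb0: "fb $ 0 = 0" using f0 by (simp add: fb_def qshift_nth)
  have gb0: "gb $ 0 = 0" using g0 by (simp add: gb_def qshift_nth)
  define f1 where "f1 = f $ 1"
  define g1 where "g1 = g $ 1"
  define Fb where "Fb = phi_scale lam f1"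
  define Gb where "Gb = phi_scale lam g1"
  define Qc :: R where "Qc = fls_const (cK q)"
  have fb1: "fb $ 1 = Qc * Fb" by (simp add: fb_def qshift_nth Qc_def Fb_def f1_def)
  have gb1: "gb $ 1 = Qc * Gb" by (simp add: gb_def qshift_nth Qc_def Gb_def g1_def)
  have RA: "(g1*f1 - 1)*(g1*(Qc*Fb) - Qc)*(- fls_const (cK b5))*(- fls_const (cK b6))*(- fls_const (cK b7))*(- fls_const (cK b8))
      = (g1 - fls_const (cK b1))*(g1 - fls_const (cK b2))*(g1 - fls_const (cK b3))*(g1 - fls_const (cK b4))"
  proof -
    have "((g * f - fps_X ^ 2) * (g * fb - fps_const (fls_const (cK q)) * fps_X ^ 2) *
            (g - fps_const (fls_const (cK b5))) * (g - fps_const (fls_const (cK b6)))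
            * (g - fps_const (fls_const (cK b7))) * (g - fps_const (fls_const (cK b8)))) $ 4
         = ((g * f - 1) * (g * fb - 1) *
            (g - fps_const (fls_const (cK b1)) * fps_X) * (g - fps_const (fls_const (cK b2)) * fps_X)
            * (g - fps_const (fls_const (cK b3)) * fps_X) * (g - fps_const (fls_const (cK b4)) * fps_X)) $ 4"
      by (simp only: EA)
    moreover have "((g * f - fps_X ^ 2) * (g * fb - fps_const (fls_const (cK q)) * fps_X ^ 2) *
            (g - fps_const (fls_const (cK b5))) * (g - fps_const (fls_const (cK b6)))
            * (g - fps_const (fls_const (cK b7))) * (g - fps_const (fls_const (cK b8)))) $ 4
       = (g1*f1 - 1)*(g1*(Qc*Fb) - Qc)*(- fls_const (cK b5))*(- fls_const (cK b6))*(- fls_const (cK b7))*(- fls_const (cK b8))"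
      using c4L[OF g0 f0 g0 fb0 g0, of 1 "fls_const (cK q)" "fls_const (cK b5)" "fls_const (cK b6)" "fls_const (cK b7)" "fls_const (cK b8)"]
      by (simp only: fps_const_1_eq_1 mult_1 fb1 f1_def[symmetric] g1_def[symmetric] Qc_def[symmetric])
    moreover have "((g * f - 1) * (g * fb - 1) *
            (g - fps_const (fls_const (cK b1)) * fps_X) * (g - fps_const (fls_const (cK b2)) * fps_X)
            * (g - fps_const (fls_const (cK b3)) * fps_X) * (g - fps_const (fls_const (cK b4)) * fps_X)) $ 4
       = (g1 - fls_const (cK b1))*(g1 - fls_const (cK b2))*(g1 - fls_const (cK b3))*(g1 - fls_const (cK b4))"
      using c4R[OF g0 f0 g0 fb0 g0] by (simp only: g1_def[symmetric])
    ultimately show ?thesis by simp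
  qed
  define Q2c :: R where "Q2c = fls_const (cK (q^2))"
  have RB: "(g1*(Qc*Fb) - Qc)*((Qc*Gb)*(Qc*Fb) - Q2c)*(- fls_const (cK (inverse b5)))*(- fls_const (cK (inverse b6)))
       *(- fls_const (cK (inverse b7)))*(- fls_const (cK (inverse b8)))
      = (Qc*Fb - fls_const (cK (inverse b1 * q)))*(Qc*Fb - fls_const (cK (inverse b2 * q)))
       *(Qc*Fb - fls_const (cK (inverse b3 * q)))*(Qc*Fb - fls_const (cK (inverse b4 * q)))"
  proof -
    have "((g * fb - fps_const (fls_const (cK q)) * fps_X ^ 2) * (gb * fb - fps_const (fls_const (cK (q^2))) * fps_X ^ 2) *
            (fb - fps_const (fls_const (cK (inverse b5)))) * (fb - fps_const (fls_const (cK (inverse b6))))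
            * (fb - fps_const (fls_const (cK (inverse b7)))) * (fb - fps_const (fls_const (cK (inverse b8))))) $ 4
          = ((g * fb - 1) * (gb * fb - 1) *
            (fb - fps_const (fls_const (cK (inverse b1 * q))) * fps_X) * (fb - fps_const (fls_const (cK (inverse b2 * q))) * fps_X) *
            (fb - fps_const (fls_const (cK (inverse b3 * q))) * fps_X) * (fb - fps_const (fls_const (cK (inverse b4 * q))) * fps_X)) $ 4"
      by (simp only: EB)
    moreover have "((g * fb - fps_const (fls_const (cK q)) * fps_X ^ 2) * (gb * fb - fps_const (fls_const (cK (q^2))) * fps_X ^ 2) *
            (fb - fps_const (fls_const (cK (inverse b5)))) * (fb - fps_const (fls_const (cK (inverse b6))))
            * (fb - fps_const (fls_const (cK (inverse b7)))) * (fb - fps_const (fls_const (cK (inverse b8))))) $ 4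
        = (g1*(Qc*Fb) - Qc)*((Qc*Gb)*(Qc*Fb) - Q2c)*(- fls_const (cK (inverse b5)))*(- fls_const (cK (inverse b6)))
       *(- fls_const (cK (inverse b7)))*(- fls_const (cK (inverse b8)))"
      using c4L[OF g0 fb0 gb0 fb0 fb0, of "fls_const (cK q)" "fls_const (cK (q^2))" "fls_const (cK (inverse b5))"
          "fls_const (cK (inverse b6))" "fls_const (cK (inverse b7))" "fls_const (cK (inverse b8))"]
      by (simp only: fb1 gb1 g1_def[symmetric] Qc_def[symmetric] Q2c_def[symmetric])
    moreover have "((g * fb - 1) * (gb * fb - 1) *
            (fb - fps_const (fls_const (cK (inverse b1 * q))) * fps_X) * (fb - fps_const (fls_const (cK (inverse b2 * q))) * fps_X) *
            (fb - fps_const (fls_const (cK (inverse b3 * q))) * fps_X) * (fb - fps_const (fls_const (cK (inverse b4 * q))) * fps_X)) $ 4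
        = (Qc*Fb - fls_const (cK (inverse b1 * q)))*(Qc*Fb - fls_const (cK (inverse b2 * q)))
       *(Qc*Fb - fls_const (cK (inverse b3 * q)))*(Qc*Fb - fls_const (cK (inverse b4 * q)))"
      using c4R[OF g0 fb0 gb0 fb0 fb0] by (simp only: fb1)
    ultimately show ?thesis by simp
  qed
  have q0: "q \<noteq> 0" using bnz by (simp add: q_def qq_def)
  have cq: "cK q * (cK b5 * cK b6 * cK b7 * cK b8) = Bk"
  proof -
    have "q * (b5 * b6 * b7 * b8) = b1 * b2 * b3 * b4" using bnz by (simp add: q_def qq_def)
    hence "cK (q * (b5 * b6 * b7 * b8)) = cK (b1 * b2 * b3 * b4)" by simp
    thus ?thesis by (simp add: cK_mult Bk_def)
  qed
  have cKnz: "cK b \<noteq> 0" if "b \<noteq> 0" for b using that by (simp add: cK_eq0)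
  let ?c = "fls_const :: K \<Rightarrow> R"
  have R1: "?c Bk * (g1*f1 - 1)*(g1*Fb - 1)
      = (g1 - ?c (cK b1))*(g1 - ?c (cK b2))*(g1 - ?c (cK b3))*(g1 - ?c (cK b4))"
  proof -
    have hB: "?c Bk = Qc * ?c (cK b5) * ?c (cK b6) * ?c (cK b7) * ?c (cK b8)"
      unfolding cq[symmetric] Qc_def by (simp add: mult.assoc)
    have "?c Bk * (g1*f1 - 1)*(g1*Fb - 1)
       = (g1*f1 - 1)*(g1*(Qc*Fb) - Qc)*(- ?c (cK b5))*(- ?c (cK b6))*(- ?c (cK b7))*(- ?c (cK b8))"
      unfolding hB by algebra
    thus ?thesis using RA by (rule trans)
  qed
  have R2: "(g1*Fb - 1)*(Gb*Fb - 1)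
      = ?c Bk * (Fb - ?c (inverse (cK b1)))*(Fb - ?c (inverse (cK b2)))*(Fb - ?c (inverse (cK b3)))*(Fb - ?c (inverse (cK b4)))"
  proof -
    let ?i = "\<lambda>b. ?c (inverse (cK b))"
    have hQ2: "Q2c = Qc^2" by (simp add: Q2c_def Qc_def cK_power fls_const_power)
    have hk: "?c (cK (inverse b * q)) = ?i b * Qc" if "b \<noteq> 0" for b
      using that by (simp add: Qc_def cK_mult cK_inverse)
    have hi: "?c (cK (inverse b)) = ?i b" if "b \<noteq> 0" for b
      using that by (simp add: cK_inverse)
    have hIB: "?i b5 * ?i b6 * ?i b7 * ?i b8 * ?c Bk = Qc"
    proof -
      have "inverse (cK b5) * inverse (cK b6) * inverse (cK b7) * inverse (cK b8) * Bk = cK q"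
        unfolding cq[symmetric] using bnz cKnz by (simp add: field_simps)
      thus ?thesis unfolding Qc_def by (metis fls_const_mult_const)
    qed
    have Qnz: "Qc \<noteq> 0" using q0 by (simp add: Qc_def cK_eq0)
    have inz: "?i b5 * ?i b6 * ?i b7 * ?i b8 \<noteq> 0" using bnz cKnz by simp
    have RB': "(g1*(Qc*Fb) - Qc)*((Qc*Gb)*(Qc*Fb) - Qc^2)*(- ?i b5)*(- ?i b6)*(- ?i b7)*(- ?i b8)
      = (Qc*Fb - ?i b1 * Qc)*(Qc*Fb - ?i b2 * Qc)*(Qc*Fb - ?i b3 * Qc)*(Qc*Fb - ?i b4 * Qc)"
      using RB unfolding hQ2 hk[OF bnz(1)] hk[OF bnz(2)] hk[OF bnz(3)] hk[OF bnz(4)]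
        hi[OF bnz(5)] hi[OF bnz(6)] hi[OF bnz(7)] hi[OF bnz(8)] .
    have "(Qc^3 * (?i b5 * ?i b6 * ?i b7 * ?i b8)) * ((g1*Fb - 1)*(Gb*Fb - 1))
       = (g1*(Qc*Fb) - Qc)*((Qc*Gb)*(Qc*Fb) - Qc^2)*(- ?i b5)*(- ?i b6)*(- ?i b7)*(- ?i b8)" by algebra
    also have "\<dots> = (Qc*Fb - ?i b1 * Qc)*(Qc*Fb - ?i b2 * Qc)*(Qc*Fb - ?i b3 * Qc)*(Qc*Fb - ?i b4 * Qc)" by (rule RB')
    also have "\<dots> = Qc^3 * Qc * ((Fb - ?i b1)*(Fb - ?i b2)*(Fb - ?i b3)*(Fb - ?i b4))" by algebra
    also have "\<dots> = Qc^3 * (?i b5 * ?i b6 * ?i b7 * ?i b8 * ?c Bk) * ((Fb - ?i b1)*(Fb - ?i b2)*(Fb - ?i b3)*(Fb - ?i b4))"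
      by (simp only: hIB)
    also have "\<dots> = (Qc^3 * (?i b5 * ?i b6 * ?i b7 * ?i b8)) * (?c Bk * (Fb - ?i b1)*(Fb - ?i b2)*(Fb - ?i b3)*(Fb - ?i b4))"
      by algebra
    finally show ?thesis using Qnz inz by simp
  qed
  define A where "A = Abs_fps (\<lambda>n. f1 $$ (int n - 1))"
  define G where "G = Abs_fps (\<lambda>n. g1 $$ (int n - 1))"
  have vf: "\<forall>j < -1. f1 $$ j = 0"
  proof (intro allI impI)
    fix j :: int assume "j < -1"
    hence "- j > int 1" by simp
    thus "f1 $$ j = 0" using van[rule_format, of 1 "-j"] by (simp add: f1_def)
  qed
  have vg: "\<forall>j < -1. g1 $$ j = 0"
  proof (intro allI impI)
    fix j :: int assume "j < -1"
    hence "- j > int 1" by simp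
    thus "g1 $$ j = 0" using van[rule_format, of 1 "-j"] by (simp add: g1_def)
  qed
  have hf1: "f1 = fls_X_inv * fps_to_fls A" unfolding A_def by (rule rep[OF vf])
  have hg1: "g1 = fls_X_inv * fps_to_fls G" unfolding G_def by (rule rep[OF vg])
  have hFb: "Fb = fls_X_inv * fps_to_fls (sc lam A)" unfolding Fb_def by (subst hf1) (rule phi_rep)
  have hGb: "Gb = fls_X_inv * fps_to_fls (sc lam G)" unfolding Gb_def by (subst hg1) (rule phi_rep)
  have C1: "?c Bk * (fps_to_fls A * fps_to_fls G - fls_X^2) * (fps_to_fls G * fps_to_fls (sc lam A) - fls_X^2)
     = (fps_to_fls G - ?c (cK b1) * fls_X) * (fps_to_fls G - ?c (cK b2) * fls_X)
      * (fps_to_fls G - ?c (cK b3) * fls_X) * (fps_to_fls G - ?c (cK b4) * fls_X)"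
    by (rule conv1[OF XinvX]) (use R1 in \<open>simp only: hf1 hg1 hFb\<close>)
  have C2: "(fps_to_fls G * fps_to_fls (sc lam A) - fls_X^2) * (fps_to_fls (sc lam G) * fps_to_fls (sc lam A) - fls_X^2)
     = ?c Bk * (fps_to_fls (sc lam A) - ?c (inverse (cK b1)) * fls_X) * (fps_to_fls (sc lam A) - ?c (inverse (cK b2)) * fls_X)
      * (fps_to_fls (sc lam A) - ?c (inverse (cK b3)) * fls_X) * (fps_to_fls (sc lam A) - ?c (inverse (cK b4)) * fls_X)"
    by (rule conv2[OF XinvX]) (use R2 in \<open>simp only: hf1 hg1 hFb hGb\<close>)
  have E1: "fps_const Bk * (A*G - fps_X^2) * (G*sc lam A - fps_X^2)
     = (G - fps_const (cK b1) * fps_X)*(G - fps_const (cK b2) * fps_X)*(G - fps_const (cK b3) * fps_X)*(G - fps_const (cK b4) * fps_X)"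
    by (rule fps_to_fls_eq_imp_fps_eq) (use C1 in \<open>simp add: fls_times_fps_to_fls fps_to_fls_power\<close>)
  have E2: "(G*sc lam A - fps_X^2) * (sc lam G*sc lam A - fps_X^2)
     = fps_const Bk * (sc lam A - fps_const (inverse (cK b1)) * fps_X)*(sc lam A - fps_const (inverse (cK b2)) * fps_X)
        *(sc lam A - fps_const (inverse (cK b3)) * fps_X)*(sc lam A - fps_const (inverse (cK b4)) * fps_X)"
    by (rule fps_to_fls_eq_imp_fps_eq) (use C2 in \<open>simp add: fls_times_fps_to_fls fps_to_fls_power\<close>)
  have A0: "A $ 0 = 1" using F11 by (simp add: A_def f1_def coeffF_def)
  have G0: "G $ 0 = LambdaK" using G11 by (simp add: G_def g1_def coeffF_def)
  have Dnz: "cK b1 * cK b2 * cK b3 * cK b4 - LambdaK^2 \<noteq> 0"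
    using BmL2_ne0[of "b1*b2*b3*b4"] by (simp add: cK_mult)
  have lamn: "(LambdaK^2/(cK b1 * cK b2 * cK b3 * cK b4))^n \<noteq> 1 \<and> (LambdaK^2/(cK b1 * cK b2 * cK b3 * cK b4))^n \<noteq> -1"
    if "n > 0" for n
    using lam_pow_ne[of "b1*b2*b3*b4" n] that bnz by (simp add: cK_mult)
  note MR = master[OF cKnz[OF bnz(1)] cKnz[OF bnz(2)] cKnz[OF bnz(3)] cKnz[OF bnz(4)] LambdaK_ne0 Dnz lamn
     E1[unfolded Bk_def lam_eq] E2[unfolded Bk_def lam_eq] A0 G0]
  note Kd = Kids[OF cKnz[OF bnz(1)] cKnz[OF bnz(2)] cKnz[OF bnz(3)] cKnz[OF bnz(4)] LambdaK_ne0 Dnz]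
  have FE: "Feq b1 b2 b3 b4 = - (cK b1 * cK b2 * cK b3 * cK b4 * LambdaK * ((cK b1 + cK b2 + cK b3 + cK b4)
      + 2 * (inverse (cK b1) + inverse (cK b2) + inverse (cK b3) + inverse (cK b4)) * LambdaK
      + (inverse (cK b1) * inverse (cK b2) * inverse (cK b3) + inverse (cK b1) * inverse (cK b2) * inverse (cK b4)
     + inverse (cK b1) * inverse (cK b3) * inverse (cK b4) + inverse (cK b2) * inverse (cK b3) * inverse (cK b4)) * LambdaK ^ 2))
      / (cK b1 * cK b2 * cK b3 * cK b4 - LambdaK ^ 2) ^ 2"
    using bnz by (simp add: Feq_def Let_def BB_def S1_def S3_def cK_add cK_mult cK_inverse)
  have GE: "Geq b1 b2 b3 b4 = - (cK b1 * cK b2 * cK b3 * cK b4 * LambdaK * ((cK b1*cK b2*cK b3+cK b1*cK b2*cK b4+cK b1*cK b3*cK b4+cK b2*cK b3*cK b4)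
      + 2 * (cK b1 + cK b2 + cK b3 + cK b4) * LambdaK
      + (inverse (cK b1) + inverse (cK b2) + inverse (cK b3) + inverse (cK b4)) * LambdaK ^ 2))
      / (cK b1 * cK b2 * cK b3 * cK b4 - LambdaK ^ 2) ^ 2"
    using bnz by (simp add: Geq_def Let_def BB_def S1_def S3_def cK_add cK_mult cK_inverse)
  have ME: "muK b1 b2 b3 b4 = LambdaK * (LambdaK + cK b1*cK b2) * (LambdaK + cK b1*cK b3) * (LambdaK + cK b1*cK b4)
      * (LambdaK + cK b2*cK b3) * (LambdaK + cK b2*cK b4) * (LambdaK + cK b3*cK b4)
      / (cK b1 * cK b2 * cK b3 * cK b4 - LambdaK ^ 2) ^ 4"
    by (simp add: muK_def Let_def BB_def cK_mult)
  have BE: "cK (BB b1 b2 b3 b4) = cK b1 * cK b2 * cK b3 * cK b4" by (simp add: BB_def cK_mult)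
  have hA: "A = 1 + fps_const (Feq b1 b2 b3 b4) * fps_X + fps_const (muK b1 b2 b3 b4) * fps_X^2"
    using MR unfolding FE ME Kd(1)[symmetric] Kd(3) by blast
  have hG: "G = fps_const LambdaK + fps_const (Geq b1 b2 b3 b4) * fps_X
      + fps_const (cK (BB b1 b2 b3 b4) / LambdaK * muK b1 b2 b3 b4) * fps_X^2"
    using MR unfolding GE ME BE Kd(2)[symmetric] Kd(4) by blast
  have XX: "fls_X_inv * fls_X = (1::R)" by (rule XinvX)
  have tA: "fps_to_fls A = 1 + ?c (Feq b1 b2 b3 b4) * fls_X + ?c (muK b1 b2 b3 b4) * fls_X^2"
    unfolding hA by (simp add: fls_times_fps_to_fls fps_to_fls_power)
  have tG: "fps_to_fls G = ?c LambdaK + ?c (Geq b1 b2 b3 b4) * fls_X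
      + ?c (cK (BB b1 b2 b3 b4) / LambdaK * muK b1 b2 b3 b4) * fls_X^2"
    unfolding hG by (simp add: fls_times_fps_to_fls fps_to_fls_power)
  have rf: "f $ 1 = fls_X_inv + fls_const (Feq b1 b2 b3 b4) + fls_const (muK b1 b2 b3 b4) * fls_X"
    unfolding f1_def[symmetric] hf1 tA using XX by algebra
  have rg: "g $ 1 = fls_const LambdaK * fls_X_inv + fls_const (Geq b1 b2 b3 b4)
                 + fls_const (cK (BB b1 b2 b3 b4) / LambdaK * muK b1 b2 b3 b4) * fls_X"
    unfolding g1_def[symmetric] hg1 tG using XX by algebra
  have nth3: "(fls_X_inv + fls_const c + fls_const m * fls_X) $$ k = 0" if "k \<ge> 2" for c m :: K and k
    using that by (simp add: fls_X_times_conv_shift)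
  have nth3': "(fls_const l * fls_X_inv + fls_const c + fls_const m * fls_X) $$ k = 0" if "k \<ge> 2" for l c m :: K and k
    using that by (simp add: fls_X_times_conv_shift fls_X_inv_times_conv_shift)
  show ?thesis
    using rf rg nth3 nth3' by (auto simp: coeffF_def)
qed


end
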